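(* Let $b\ge 2$. For every positive integer $N$ there exist infinitely many positive integers $M$ such that $N\cdot M$ is a $b$-wARH number. In particular every positive integer divides some $b$-wARH number.
   Context: Fix a base $b\ge 2$. $s_b(N)$ is the sum of the base-$b$ digits of $N$. For a positive integer $X$, its reversal $X^R$ is the integer whose base-$b$ representation is that of $X$ written in reverse order (leading zeros of the result are dropped). A positive integer $N$ is a $b$-wARH number if there exists an integer $A\ge 0$ such that $N=(A+s_b(N))+(A+s_b(N))^R$. *)

theory Defs
  imports Main
begin

fun digits :: "nat \<Rightarrow> nat \<Rightarrow> nat list" where
  "digits b n = (if b < 2 \<or> n = 0 then [] else n mod b # digits b (n div b))"

declare digits.simps[simp del]

fun from_digits :: "nat \<Rightarrow> nat list \<Rightarrow> nat" where
  "from_digits b [] = 0"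
| "from_digits b (d # ds) = d + b * from_digits b ds"

definition digit_sum :: "nat \<Rightarrow> nat \<Rightarrow> nat" where
  "digit_sum b n = sum_list (digits b n)"

text \<open>Reversal: read the base-b representation backwards (leading zeros dropped
  automatically by evaluation).\<close>
definition rev_num :: "nat \<Rightarrow> nat \<Rightarrow> nat" where
  "rev_num b n = from_digits b (rev (digits b n))"

definition wARH :: "nat \<Rightarrow> nat \<Rightarrow> bool" where
  "wARH b N \<longleftrightarrow> N > 0 \<and>
     (\<exists>A::nat. N = (A + digit_sum b N) + rev_num b (A + digit_sum b N))"

end

theory Submission
  imports Defs "HOL-Library.Infinite_Set"
begin

lemma fd_append: "from_digits b (xs @ ys) = from_digits b xs + b ^ length xs * from_digits b ys"
  by (induction xs) (auto simp: algebra_simps)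

lemma fd_lt: "b > 0 \<Longrightarrow> \<forall>d\<in>set ds. d < b \<Longrightarrow> from_digits b ds < b ^ length ds"
proof (induction ds)
  case Nil then show ?case by simp
next
  case (Cons d ds)
  then have "from_digits b ds + 1 \<le> b ^ length ds" by simp
  then have "b * (from_digits b ds + 1) \<le> b * b ^ length ds" by (rule mult_left_mono) simp
  moreover have "d < b" using Cons by simp
  ultimately show ?case by (simp add: algebra_simps)
qed

lemma fd_ge: "b > 0 \<Longrightarrow> ds \<noteq> [] \<Longrightarrow> last ds \<noteq> 0 \<Longrightarrow> b ^ (length ds - 1) \<le> from_digits b ds"
proof (induction ds)
  case Nil then show ?case by simp
next
  case (Cons d ds)
  show ?case
  proof (cases "ds = []")
    case True then show ?thesis using Cons by simp
  next
    case False
    then have "b ^ (length ds - 1) \<le> from_digits b ds" using Cons by simp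
    then have "b * b ^ (length ds - 1) \<le> b * from_digits b ds" by simp
    moreover have "b * b ^ (length ds - 1) = b ^ length ds" using False
      by (cases ds) auto
    ultimately have "b ^ length ds \<le> d + b * from_digits b ds" by linarith
    then show ?thesis by simp
  qed
qed

lemma digits_fd: "b \<ge> 2 \<Longrightarrow> \<forall>d\<in>set ds. d < b \<Longrightarrow> (ds = [] \<or> last ds \<noteq> 0) \<Longrightarrow>
   digits b (from_digits b ds) = ds"
proof (induction ds)
  case Nil then show ?case by (simp add: digits.simps)
next
  case (Cons d ds)
  have pos: "from_digits b (d # ds) \<noteq> 0"
  proof (cases "ds = []")
    case True then show ?thesis using Cons by simp
  next
    case False
    then have "b ^ (length ds - 1) \<le> from_digits b ds" using Cons fd_ge[of b ds] by simp
    moreover have "0 < b ^ (length ds - 1)" using Cons by simp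
    ultimately have "from_digits b ds > 0" by linarith
    then show ?thesis using Cons by simp
  qed
  have m: "(d + b * from_digits b ds) mod b = d" using Cons by simp
  have dv: "(d + b * from_digits b ds) div b = from_digits b ds" using Cons by simp
  have "digits b (from_digits b ds) = ds" using Cons by (cases ds) auto
  then show ?case using pos Cons m dv by (subst digits.simps) simp
qed

lemma digit_sum_le: "digit_sum b n \<le> (b - 1) * length (digits b n)"
  unfolding digit_sum_def
proof (induction b n rule: digits.induct)
  case (1 b n)
  show ?case
  proof (cases "b < 2 \<or> n = 0")
    case True then show ?thesis by (subst digits.simps) simp
  next
    case False
    then have "n mod b \<le> b - 1" using mod_less_divisor[of b n] by linarith
    moreover have "digits b n = n mod b # digits b (n div b)" using False by (subst digits.simps) simp
    moreover have "(b - 1) * length (digits b n) = (b - 1) + (b - 1) * length (digits b (n div b))"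
      using calculation(2) by simp
    moreover have "sum_list (digits b n) = n mod b + sum_list (digits b (n div b))"
      using calculation(2) by simp
    ultimately show ?thesis using 1 False by linarith
  qed
qed

lemma length_digits_le: "b \<ge> 2 \<Longrightarrow> n < b ^ k \<Longrightarrow> length (digits b n) \<le> k"
proof (induction k arbitrary: n)
  case 0 then show ?case by (simp add: digits.simps)
next
  case (Suc k)
  show ?case
  proof (cases "n = 0")
    case True then show ?thesis by (simp add: digits.simps)
  next
    case False
    have "n div b < b ^ k" using Suc.prems by (simp add: div_less_iff_less_mult mult.commute)
    then have "length (digits b (n div b)) \<le> k" using Suc by simp
    then show ?thesis using False Suc.prems by (subst digits.simps) simp
  qed
qed

lemma pow_bound: assumes "b \<ge> 2" "k \<ge> 3" shows "(b - 1) * (k + 1) \<le> b ^ (k - 1)"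
  using assms(2)
proof (induction k rule: dec_induct)
  case base
  obtain c where c: "b = c + 2" using assms by (metis add.commute le_Suc_ex)
  have "(c + 1) * 4 \<le> (c + 2) * (c + 2)" by (simp add: algebra_simps)
  then show ?case using c by (simp add: numeral_eq_Suc)
next
  case (step k)
  have "(b - 1) * (Suc k + 1) \<le> 2 * ((b - 1) * (k + 1))" by simp
  also have "\<dots> \<le> 2 * b ^ (k - 1)" using step assms by simp
  also have "\<dots> \<le> b * b ^ (k - 1)" using step assms by simp
  also have "\<dots> = b ^ (Suc k - 1)" using step assms by (cases k) auto
  finally show ?case .
qed

lemma fd_concat: "from_digits b (concat (replicate t L)) = from_digits b L * (\<Sum>i<t. b ^ (i * length L))"
proof (induction t)
  case 0 then show ?case by simp
next
  case (Suc t)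
  have "(\<Sum>i<Suc t. b ^ (i * length L)) = 1 + b ^ length L * (\<Sum>i<t. b ^ (i * length L))"
    by (subst sum.lessThan_Suc_shift) (simp add: sum_distrib_left power_add del: sum.lessThan_Suc)
  then show ?case using Suc by (simp add: fd_append algebra_simps)
qed

lemma fd_rep_max: "b \<ge> 1 \<Longrightarrow> from_digits b (replicate h (b - 1)) + 1 = b ^ h"
proof (induction h)
  case 0 then show ?case by simp
next
  case (Suc h)
  have "from_digits b (replicate (Suc h) (b - 1)) + 1 = b * (from_digits b (replicate h (b - 1)) + 1)"
    using Suc.prems by (simp add: algebra_simps)
  moreover have "b * (from_digits b (replicate h (b - 1)) + 1) = b * b ^ h" using Suc by simp
  ultimately show ?case by simp
qed

lemma fd_zeros: "from_digits b (replicate n 0) = 0"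
  by (induction n) auto

lemma periodic:
  fixes N b :: nat
  assumes N: "N > 0"
  shows "\<exists>u p. p > 0 \<and> (\<forall>x j. x \<ge> u \<longrightarrow> b ^ (x + p * j) mod N = b ^ x mod N)"
proof -
  let ?f = "\<lambda>x. b ^ x mod N"
  have "\<not> inj_on ?f {0..N}"
  proof
    assume inj: "inj_on ?f {0..N}"
    have c1: "card (?f ` {0..N}) = N + 1" using card_image[OF inj] by simp
    have "?f ` {0..N} \<subseteq> {0..<N}" using N by auto
    then have "card (?f ` {0..N}) \<le> N" using card_mono[of "{0..<N}"] by fastforce
    then show False using c1 by simp
  qed
  then obtain x y where xy: "x \<noteq> y" "?f x = ?f y" unfolding inj_on_def by blast
  then obtain u v where uv: "u < v" "b ^ u mod N = b ^ v mod N"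
    by (metis linorder_neqE_nat)
  define p where "p = v - u"
  have step: "b ^ (x + p) mod N = b ^ x mod N" if "x \<ge> u" for x
  proof -
    have "b ^ (x + p) = b ^ (x - u) * b ^ v" using that uv by (simp add: p_def flip: power_add)
    then have "b ^ (x + p) mod N = b ^ (x - u) * (b ^ v mod N) mod N" by (simp add: mod_mult_right_eq)
    also have "\<dots> = b ^ (x - u) * (b ^ u mod N) mod N" using uv by simp
    also have "\<dots> = b ^ (x - u) * b ^ u mod N" by (simp add: mod_mult_right_eq)
    also have "\<dots> = b ^ x mod N" using that by (simp flip: power_add)
    finally show ?thesis .
  qed
  have perj: "b ^ (x + p * j) mod N = b ^ x mod N" if "x \<ge> u" for x j
  proof (induction j)
    case 0 then show ?case by simp
  next
    case (Suc j)
    have "b ^ (x + p * Suc j) = b ^ ((x + p * j) + p)" by (simp add: algebra_simps)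
    then have "b ^ (x + p * Suc j) mod N = b ^ (x + p * j) mod N" using step that by simp
    then show ?case using Suc by simp
  qed
  have p0: "p > 0" using uv p_def by simp
  show ?thesis using p0 perj by blast
qed

lemma last_concat_rep: "C \<noteq> [] \<Longrightarrow> last (concat (replicate (Suc n) C)) = last C"
  by (induction n) auto

theorem corollary6:
  fixes b :: nat
  assumes "b \<ge> 2"
  shows "\<forall>N::nat. N > 0 \<longrightarrow> infinite {M::nat. M > 0 \<and> wARH b (N * M)}"
proof (intro allI impI)
  fix N :: nat
  assume N: "N > 0"
  have b0: "b > 0" "b \<ge> 1" using assms by auto
  obtain p u where p: "p > 0" and per: "\<And>x j. x \<ge> u \<Longrightarrow> b ^ (x + p * j) mod N = b ^ x mod N"
    using periodic[of N b, OF N] by blast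
  show "infinite {M::nat. M > 0 \<and> wARH b (N * M)}"
    unfolding infinite_nat_iff_unbounded
  proof
    fix B :: nat
    define s where "s = u + 2 + N * (B + 1)"
    define h where "h = p * s"
    have hs: "h \<ge> s" using p by (simp add: h_def)
    have h2: "h \<ge> 2" using hs s_def by simp
    define C where "C = replicate h (b - 1) @ replicate (h - 1) 0 @ [1::nat]"
    define ds where "ds = concat (replicate N C)"
    define X where "X = from_digits b ds"
    define V where "V = X + rev_num b X"
    define k where "k = length ds"
    have lenC: "length C = 2 * h" using h2 by (simp add: C_def)
    have klen: "k = 2 * h * N" by (simp add: k_def ds_def length_concat lenC sum_list_replicate)
    have setC: "\<forall>d\<in>set C. d < b" using assms by (auto simp: C_def)
    have "set ds \<subseteq> set C" by (auto simp: ds_def)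
    then have setds: "\<forall>d\<in>set ds. d < b" using setC by blast
    have setrds: "\<forall>d\<in>set (rev ds). d < b" using setds by simp
    have Cne: "C \<noteq> []" by (simp add: C_def)
    have lastds: "last ds = 1" using last_concat_rep[OF Cne, of "N - 1"] N by (simp add: ds_def C_def)
    have dsne: "ds \<noteq> []" using N Cne by (cases N) (simp_all add: ds_def)
    have digX: "digits b X = ds" unfolding X_def using digits_fd[OF assms setds] lastds by simp
    have revX: "rev_num b X = from_digits b (concat (replicate N (rev C)))"
      unfolding rev_num_def digX ds_def by (simp add: rev_concat)
    define F where "F = from_digits b (replicate h (b - 1))"
    have F1: "F + 1 = b ^ h" using fd_rep_max[OF b0(2)] F_def by simp
    have pw: "b ^ h * b ^ (h - 1) = b ^ (2 * h - 1)"
    proof -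
      have "h + (h - 1) = 2 * h - 1" using h2 by simp
      then show ?thesis by (metis power_add)
    qed
    have fC: "from_digits b C = F + b ^ (2 * h - 1)"
      unfolding pw[symmetric] by (simp add: C_def fd_append fd_zeros F_def)
    have revC: "rev C = [1] @ replicate (h - 1) 0 @ replicate h (b - 1)" by (simp add: C_def)
    have pw2: "b * b ^ (h - 1) = b ^ h" using h2 by (cases h) auto
    have fR: "from_digits b (rev C) = 1 + b ^ h * F"
    proof -
      have "from_digits b (rev C) = 1 + b * (b ^ (h - 1) * F)"
        unfolding revC by (simp add: fd_append fd_zeros F_def)
      then show ?thesis using pw2 by (simp add: mult.assoc[symmetric])
    qed
    have pw3: "b ^ h * b ^ h = b ^ (2 * h - 1) * b"
    proof -
      have "h + h = Suc (2 * h - 1)" using h2 by simp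
      then show ?thesis by (metis power_add power_Suc2)
    qed
    have sumC: "from_digits b C + from_digits b (rev C) = (b + 1) * b ^ (2 * h - 1)"
    proof -
      have "from_digits b C + from_digits b (rev C) = (F + 1) + b ^ h * F + b ^ (2 * h - 1)"
        using fC fR by simp
      also have "\<dots> = b ^ h * (F + 1) + b ^ (2 * h - 1)"
      proof -
        have "b ^ h * (F + 1) = b ^ h * F + b ^ h" by (simp add: algebra_simps)
        then show ?thesis using F1 by linarith
      qed
      also have "\<dots> = b ^ (2 * h - 1) * b + b ^ (2 * h - 1)" using F1 pw3 by metis
      also have "\<dots> = (b + 1) * b ^ (2 * h - 1)" by (simp add: algebra_simps)
      finally show ?thesis .
    qed
    define S where "S = (\<Sum>i<N. b ^ (i * (2 * h)))"
    have VS: "V = (b + 1) * (b ^ (2 * h - 1) * S)"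
    proof -
      have "V = from_digits b ds + from_digits b (concat (replicate N (rev C)))"
        using V_def X_def revX by simp
      also have "\<dots> = (from_digits b C + from_digits b (rev C)) * S"
        unfolding ds_def S_def fd_concat by (simp add: lenC algebra_simps)
      finally have "V = (from_digits b C + from_digits b (rev C)) * S" .
      then show ?thesis using sumC by (simp only: mult.assoc)
    qed
    have hu: "2 * h - 1 \<ge> u" using hs s_def by simp
    have trm: "b ^ (2 * h - 1) * b ^ (i * (2 * h)) mod N = b ^ (2 * h - 1) mod N" for i
    proof -
      have "b ^ (2 * h - 1) * b ^ (i * (2 * h)) = b ^ (2 * h - 1 + p * (2 * s * i))"
        by (simp add: power_add h_def algebra_simps)
      then show ?thesis using per[OF hu] by simp
    qed
    have "b ^ (2 * h - 1) * S mod N = (\<Sum>i<N. b ^ (2 * h - 1) * b ^ (i * (2 * h)) mod N) mod N"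
      unfolding S_def sum_distrib_left by (simp add: mod_sum_eq)
    also have "\<dots> = (N * (b ^ (2 * h - 1) mod N)) mod N" using trm by simp
    also have "\<dots> = 0" by simp
    finally have "N dvd b ^ (2 * h - 1) * S" by auto
    then have "N dvd V" using VS by simp
    then obtain M where VM: "V = N * M" by auto
    have hN: "h \<le> h * N" using N by simp
    have kh: "k \<ge> 2 * h" using klen hN by simp
    have k4: "k \<ge> 3" using kh h2 by simp
    have Xge: "b ^ (k - 1) \<le> X" unfolding X_def k_def using fd_ge[OF b0(1) dsne] lastds by simp
    have Xlt: "X < b ^ k" unfolding X_def k_def using fd_lt[OF b0(1) setds] .
    have Rlt: "rev_num b X < b ^ k"
      unfolding rev_num_def digX k_def using fd_lt[OF b0(1) setrds] by simp
    have "V < b ^ (k + 1)"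
    proof -
      have "V < 2 * b ^ k" using Xlt Rlt V_def by simp
      also have "\<dots> \<le> b * b ^ k" using assms by simp
      finally show ?thesis by simp
    qed
    then have "length (digits b V) \<le> k + 1" using length_digits_le[OF assms] by blast
    then have "digit_sum b V \<le> (b - 1) * (k + 1)"
      using digit_sum_le[of b V] by (meson le_trans mult_le_mono2)
    also have "\<dots> \<le> b ^ (k - 1)" using pow_bound[OF assms k4] .
    finally have dsX: "digit_sum b V \<le> X" using Xge by simp
    have "b ^ (k - 1) > 0" using b0 by simp
    then have "X > 0" using Xge by linarith
    then have Vpos: "V > 0" using V_def by simp
    have "wARH b V"
      unfolding wARH_def
    proof (intro conjI exI)
      show "V > 0" by (fact Vpos)
      show "V = (X - digit_sum b V + digit_sum b V) + rev_num b (X - digit_sum b V + digit_sum b V)"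
        using dsX V_def by simp
    qed
    moreover have "M > B"
    proof -
      have "k + 1 \<le> b ^ (k - 1)"
      proof -
        have "1 * (k + 1) \<le> (b - 1) * (k + 1)" using assms by (intro mult_le_mono1) simp
        then show ?thesis using pow_bound[OF assms k4] by simp
      qed
      then have "k < V" using Xge V_def by simp
      moreover have "k \<ge> N * (B + 1)" using kh hs s_def by simp
      ultimately have "N * (B + 1) < N * M" using VM by linarith
      then have "B + 1 < M" by (rule mult_less_cancel1[THEN iffD1, THEN conjunct2])
      then show ?thesis by simp
    qed
    ultimately show "\<exists>n>B. n \<in> {M. 0 < M \<and> wARH b (N * M)}" using VM by auto
  qed
qed

end
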